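(* In any probabilistic theory that supports universal self-steering, every irreducible finite-dimensional state space in the theory is homogeneous and weakly self-dual.
   Context: An abstract state space (system) is a pair $(A,u_A)$ where $A$ is a finite-dimensional real vector space with a closed, pointed, generating convex cone $A_+$, and $u_A$ is an interior point of the dual cone $A^*_+$; states are elements of $A_+$ with $u_A=1$. For systems $A,B$, $A\otimes_{\max}B$ (resp. $A\otimes_{\min}B$) is the space of bilinear forms on $A^*\times B^*$ ordered by the cone of forms nonnegative on $A^*_+\times B^*_+$ (resp. the cone generated by products $\alpha\otimes\beta$, $\alpha\in A_+,\beta\in B_+$), with order unit $u_A\otimes u_B$; a composite $AB$ is this vector space with any cone between these two. A probabilistic theory is a class of finite-dimensional abstract state spaces closed under formation of such composites. For a bipartite state $\omega$ on $AB$, $\hat\omega:A^*\to B$ is $\hat\omega(a)(b)=\omega(a,b)$ and $\omega^B=\hat\omega(u_A)$. An observable on $A$ is a finite family $a_i\in A^*_+$ with $\sum_ia_i=u_A$; an ensemble for $\beta\in B_+$ is a finite family $\beta_i\in B_+$ with $\sum_i\beta_i=\beta$; $\omega$ steers its $B$-marginal if every ensemble for $\omega^B$ equals $\{\hat\omega(x_i)\}$ for some observable $\{x_i\}$ on $A$. The theory supports universal self-steering if for every system $A$ in the theory and every state $\alpha$ of $A$ there is a state $\omega$ on a composite $AA$ of two copies of $A$ whose (second) marginal is $\alpha$ and which steers that marginal. A state space is irreducible if it is not an ordered direct sum of two nonzero ordered subspaces; homogeneous if its order-automorphism group acts transitively on the interior of its positive cone; weakly self-dual if there is an order-isomorphism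 (linear bijection preserving positivity in both directions) $A^*\to A$. *)

theory Defs
  imports "HOL-Analysis.Analysis"
begin

text \<open>
A system of dimension n lives in V n = vectors (nat => real) supported on {0..<n}
(i.e. R^n).  The dual space A* is identified with V n via the standard pairing.
\<close>

record system =
  sdim  :: nat
  scone :: "(nat \<Rightarrow> real) set"
  sunit :: "nat \<Rightarrow> real"

definition V :: "nat \<Rightarrow> (nat \<Rightarrow> real) set" where
  "V n = {x. \<forall>i\<ge>n. x i = 0}"

definition pair :: "nat \<Rightarrow> (nat \<Rightarrow> real) \<Rightarrow> (nat \<Rightarrow> real) \<Rightarrow> real" where
  "pair n f x = (\<Sum>i<n. f i * x i)"

definition sqdist :: "nat \<Rightarrow> (nat \<Rightarrow> real) \<Rightarrow> (nat \<Rightarrow> real) \<Rightarrow> real" where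
  "sqdist n x y = (\<Sum>i<n. (x i - y i)\<^sup>2)"

definition rel_int :: "nat \<Rightarrow> (nat \<Rightarrow> real) set \<Rightarrow> (nat \<Rightarrow> real) set" where
  "rel_int n S = {x \<in> S. \<exists>e>0. \<forall>y\<in>V n. sqdist n x y < e\<^sup>2 \<longrightarrow> y \<in> S}"

definition dual_cone :: "system \<Rightarrow> (nat \<Rightarrow> real) set" where
  "dual_cone A = {f \<in> V (sdim A). \<forall>a\<in>scone A. 0 \<le> pair (sdim A) f a}"

definition is_system :: "system \<Rightarrow> bool" where
  "is_system A \<longleftrightarrow>
     (let n = sdim A; K = scone A in
       K \<subseteq> V n \<and>
       (\<lambda>_. 0) \<in> K \<and>
       (\<forall>a\<in>K. \<forall>b\<in>K. (\<lambda>i. a i + b i) \<in> K) \<and>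
       (\<forall>c\<ge>0. \<forall>a\<in>K. (\<lambda>i. c * a i) \<in> K) \<and>
       closed K \<and>
       (\<forall>a\<in>K. (\<lambda>i. - a i) \<in> K \<longrightarrow> a = (\<lambda>_. 0)) \<and>
       (\<forall>x\<in>V n. \<exists>a\<in>K. \<exists>b\<in>K. x = (\<lambda>i. a i - b i)) \<and>
       sunit A \<in> rel_int n (dual_cone A))"

definition is_state :: "system \<Rightarrow> (nat \<Rightarrow> real) \<Rightarrow> bool" where
  "is_state A \<alpha> \<longleftrightarrow> \<alpha> \<in> scone A \<and> pair (sdim A) (sunit A) \<alpha> = 1"

text \<open>Tensor product of a \<in> V n and b \<in> V m, as element of V (n*m),
  coordinate (i,j) stored at index i*m+j.\<close>
definition tens :: "nat \<Rightarrow> nat \<Rightarrow> (nat \<Rightarrow> real) \<Rightarrow> (nat \<Rightarrow> real) \<Rightarrow> (nat \<Rightarrow> real)" where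
  "tens n m a b = (\<lambda>k. if k < n * m then a (k div m) * b (k mod m) else 0)"

text \<open>evaluation of the bilinear form \<omega> on A* x B*\<close>
definition bform :: "nat \<Rightarrow> nat \<Rightarrow> (nat \<Rightarrow> real) \<Rightarrow> (nat \<Rightarrow> real) \<Rightarrow> (nat \<Rightarrow> real) \<Rightarrow> real" where
  "bform n m \<omega> f g = (\<Sum>i<n. \<Sum>j<m. \<omega> (i * m + j) * f i * g j)"

definition max_cone :: "system \<Rightarrow> system \<Rightarrow> (nat \<Rightarrow> real) set" where
  "max_cone A B = {\<omega> \<in> V (sdim A * sdim B).
      \<forall>f\<in>dual_cone A. \<forall>g\<in>dual_cone B. 0 \<le> bform (sdim A) (sdim B) \<omega> f g}"

definition min_cone :: "system \<Rightarrow> system \<Rightarrow> (nat \<Rightarrow> real) set" where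
  "min_cone A B = {\<omega>. \<exists>(k::nat) p q. (\<forall>i<k. p i \<in> scone A \<and> q i \<in> scone B) \<and>
      \<omega> = (\<lambda>t. \<Sum>i<k. tens (sdim A) (sdim B) (p i) (q i) t)}"

definition is_composite :: "system \<Rightarrow> system \<Rightarrow> system \<Rightarrow> bool" where
  "is_composite A B C \<longleftrightarrow>
     sdim C = sdim A * sdim B \<and>
     min_cone A B \<subseteq> scone C \<and> scone C \<subseteq> max_cone A B \<and>
     sunit C = tens (sdim A) (sdim B) (sunit A) (sunit B)"

definition probabilistic_theory :: "system set \<Rightarrow> bool" where
  "probabilistic_theory T \<longleftrightarrow>
     (\<forall>A\<in>T. is_system A) \<and>
     (\<forall>A\<in>T. \<forall>B\<in>T. \<exists>C\<in>T. is_composite A B C)"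

definition hat :: "nat \<Rightarrow> nat \<Rightarrow> (nat \<Rightarrow> real) \<Rightarrow> (nat \<Rightarrow> real) \<Rightarrow> (nat \<Rightarrow> real)" where
  "hat n m \<omega> a = (\<lambda>j. if j < m then (\<Sum>i<n. \<omega> (i * m + j) * a i) else 0)"

definition marginalB :: "system \<Rightarrow> system \<Rightarrow> (nat \<Rightarrow> real) \<Rightarrow> (nat \<Rightarrow> real)" where
  "marginalB A B \<omega> = hat (sdim A) (sdim B) \<omega> (sunit A)"

definition is_observable :: "system \<Rightarrow> nat \<Rightarrow> (nat \<Rightarrow> nat \<Rightarrow> real) \<Rightarrow> bool" where
  "is_observable A k x \<longleftrightarrow>
     (\<forall>i<k. x i \<in> dual_cone A) \<and> (\<lambda>t. \<Sum>i<k. x i t) = sunit A"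

definition is_ensemble :: "system \<Rightarrow> (nat \<Rightarrow> real) \<Rightarrow> nat \<Rightarrow> (nat \<Rightarrow> nat \<Rightarrow> real) \<Rightarrow> bool" where
  "is_ensemble B \<beta> k b \<longleftrightarrow>
     (\<forall>i<k. b i \<in> scone B) \<and> (\<lambda>t. \<Sum>i<k. b i t) = \<beta>"

definition steers_marginal :: "system \<Rightarrow> system \<Rightarrow> (nat \<Rightarrow> real) \<Rightarrow> bool" where
  "steers_marginal A B \<omega> \<longleftrightarrow>
     (\<forall>k b. is_ensemble B (marginalB A B \<omega>) k b \<longrightarrow>
        (\<exists>x. is_observable A k x \<and> (\<forall>i<k. hat (sdim A) (sdim B) \<omega> (x i) = b i)))"

definition universal_self_steering :: "system set \<Rightarrow> bool" where
  "universal_self_steering T \<longleftrightarrow>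
     (\<forall>A\<in>T. \<forall>\<alpha>. is_state A \<alpha> \<longrightarrow>
        (\<exists>C\<in>T. \<exists>\<omega>. is_composite A A C \<and> is_state C \<omega> \<and>
            marginalB A A \<omega> = \<alpha> \<and> steers_marginal A A \<omega>))"

definition lin_subspace :: "(nat \<Rightarrow> real) set \<Rightarrow> bool" where
  "lin_subspace S \<longleftrightarrow> (\<lambda>_. 0) \<in> S \<and>
     (\<forall>x\<in>S. \<forall>y\<in>S. (\<lambda>i. x i + y i) \<in> S) \<and> (\<forall>c. \<forall>x\<in>S. (\<lambda>i. c * x i) \<in> S)"

definition irreducible :: "system \<Rightarrow> bool" where
  "irreducible A \<longleftrightarrow> \<not> (\<exists>S1 S2.
      lin_subspace S1 \<and> lin_subspace S2 \<and> S1 \<subseteq> V (sdim A) \<and> S2 \<subseteq> V (sdim A) \<and>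
      S1 \<noteq> {\<lambda>_. 0} \<and> S2 \<noteq> {\<lambda>_. 0} \<and> S1 \<inter> S2 = {\<lambda>_. 0} \<and>
      V (sdim A) = {(\<lambda>i. x i + y i) | x y. x \<in> S1 \<and> y \<in> S2} \<and>
      scone A = {(\<lambda>i. x i + y i) | x y. x \<in> scone A \<inter> S1 \<and> y \<in> scone A \<inter> S2})"

definition lin_on :: "nat \<Rightarrow> ((nat \<Rightarrow> real) \<Rightarrow> (nat \<Rightarrow> real)) \<Rightarrow> bool" where
  "lin_on n g \<longleftrightarrow> (\<forall>x\<in>V n. \<forall>y\<in>V n. g (\<lambda>i. x i + y i) = (\<lambda>i. g x i + g y i)) \<and>
     (\<forall>c. \<forall>x\<in>V n. g (\<lambda>i. c * x i) = (\<lambda>i. c * g x i))"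

definition order_automorphism :: "system \<Rightarrow> ((nat \<Rightarrow> real) \<Rightarrow> (nat \<Rightarrow> real)) \<Rightarrow> bool" where
  "order_automorphism A g \<longleftrightarrow> lin_on (sdim A) g \<and> bij_betw g (V (sdim A)) (V (sdim A)) \<and>
     g ` scone A = scone A"

definition homogeneous :: "system \<Rightarrow> bool" where
  "homogeneous A \<longleftrightarrow> (\<forall>a\<in>rel_int (sdim A) (scone A). \<forall>b\<in>rel_int (sdim A) (scone A).
      \<exists>g. order_automorphism A g \<and> g a = b)"

text \<open>order isomorphism A* -> A (A* identified with V n carrying the dual cone)\<close>
definition weakly_self_dual :: "system \<Rightarrow> bool" where
  "weakly_self_dual A \<longleftrightarrow> (\<exists>g. lin_on (sdim A) g \<and> bij_betw g (V (sdim A)) (V (sdim A)) \<and>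
      g ` dual_cone A = scone A)"

end

theory Submission
  imports Defs "Jordan_Normal_Form.Determinant"
begin

lemma sys_facts:
  assumes "is_system A"
  shows "scone A \<subseteq> V (sdim A)" "(\<lambda>_. 0) \<in> scone A"
    "\<And>a b. a \<in> scone A \<Longrightarrow> b \<in> scone A \<Longrightarrow> (\<lambda>i. a i + b i) \<in> scone A"
    "\<And>c a. c \<ge> 0 \<Longrightarrow> a \<in> scone A \<Longrightarrow> (\<lambda>i. c * a i) \<in> scone A"
    "closed (scone A)"
    "\<And>a. a \<in> scone A \<Longrightarrow> (\<lambda>i. - a i) \<in> scone A \<Longrightarrow> a = (\<lambda>_. 0)"
    "\<And>x. x \<in> V (sdim A) \<Longrightarrow> \<exists>a\<in>scone A. \<exists>b\<in>scone A. x = (\<lambda>i. a i - b i)"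
    "sunit A \<in> rel_int (sdim A) (dual_cone A)"
  using assms unfolding is_system_def Let_def by blast+

lemma V_add: "x \<in> V n \<Longrightarrow> y \<in> V n \<Longrightarrow> (\<lambda>i. x i + y i) \<in> V n"
  by (simp add: V_def)
lemma V_diff: "x \<in> V n \<Longrightarrow> y \<in> V n \<Longrightarrow> (\<lambda>i. x i - y i) \<in> V n"
  by (simp add: V_def)
lemma V_scale: "x \<in> V n \<Longrightarrow> (\<lambda>i. c * x i) \<in> V n"
  by (simp add: V_def)
lemma V_zero: "(\<lambda>_. 0) \<in> V n"
  by (simp add: V_def)
lemma V_ext: "x \<in> V n \<Longrightarrow> y \<in> V n \<Longrightarrow> (\<And>i. i < n \<Longrightarrow> x i = y i) \<Longrightarrow> x = y"
proof (rule ext)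
  fix i assume "x \<in> V n" "y \<in> V n" "\<And>i. i < n \<Longrightarrow> x i = y i"
  thus "x i = y i" unfolding V_def by (cases "i < n") auto
qed

lemma coord_cont: "continuous_on S (\<lambda>x::nat\<Rightarrow>real. x i)"
  by (rule continuous_on_subset[OF continuous_on_product_coordinates]) simp

lemma sqdist_cont: "continuous_on S (\<lambda>k. sqdist n y k)"
  unfolding sqdist_def by (intro continuous_intros coord_cont)

lemma sqdist_expand:
  "sqdist n y (\<lambda>i. p i + t * k i) = sqdist n y p + 2 * t * pair n (\<lambda>i. p i - y i) k + t\<^sup>2 * pair n k k"
proof -
  have "\<And>i. (y i - (p i + t*k i))\<^sup>2 = (y i - p i)\<^sup>2 + 2*t*((p i - y i)*k i) + t\<^sup>2*(k i*k i)"
    by (simp add: power2_eq_square algebra_simps)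
  thus ?thesis by (simp add: sqdist_def pair_def sum.distrib sum_distrib_left)
qed

lemma quad_neg: fixes c N :: real assumes "c < 0" "N \<ge> 0"
  shows "\<exists>t. 0 < t \<and> t < 1 \<and> 2 * t * c + t\<^sup>2 * N < 0"
proof -
  define t where "t = min (1/2) (- c / (N + 1))"
  have "- c / (N + 1) > 0" using assms by (intro divide_pos_pos) auto
  hence t0: "0 < t" by (simp add: t_def)
  have t1: "t < 1" by (simp add: t_def)
  have "t \<le> - c / (N + 1)" by (simp add: t_def)
  hence "t * (N + 1) \<le> (- c / (N + 1)) * (N + 1)" using assms by (intro mult_right_mono) auto
  hence "t * (N + 1) \<le> - c" using assms by simp
  hence "t * N < - c" using t0 by (simp add: algebra_simps)
  hence "t * (t * N) < t * (-c)" using t0 by (intro mult_strict_left_mono) auto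
  moreover have "t * (-c) > 0" using t0 assms by (intro mult_pos_pos) auto
  moreover have "2*t*c + t\<^sup>2*N = t*(t*N) - 2*(t*(-c))" by (simp add: power2_eq_square algebra_simps)
  ultimately have "2*t*c + t\<^sup>2*N < 0" by linarith
  thus ?thesis using t0 t1 by (intro exI[of _ t]) auto
qed

lemma bipolar:
  assumes sys: "is_system A" and y: "y \<in> V (sdim A)"
    and pos: "\<forall>g\<in>dual_cone A. 0 \<le> pair (sdim A) g y"
  shows "y \<in> scone A"
proof (rule ccontr)
  assume ny: "y \<notin> scone A"
  define n where "n = sdim A"
  define K where "K = scone A"
  note F = sys_facts[OF sys, folded n_def K_def]
  define r where "r = sqdist n y (\<lambda>_. 0)"
  define S where "S = K \<inter> {k. sqdist n y k \<le> r}"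
  define P where "P = PiE UNIV (\<lambda>i. {-(\<bar>y i\<bar> + sqrt r) .. \<bar>y i\<bar> + sqrt r})"
  have r0: "r \<ge> 0" unfolding r_def sqdist_def by (intro sum_nonneg) auto
  have cP: "compact P"
  proof -
    have "compactin (product_topology (\<lambda>i. euclidean) UNIV) P"
      unfolding P_def compactin_PiE by auto
    thus ?thesis by (simp add: euclidean_product_topology)
  qed
  have SP: "S \<subseteq> P"
  proof
    fix k assume k: "k \<in> S"
    have kV: "k \<in> V n" using k F(1) S_def by auto
    have bnd: "\<bar>k i\<bar> \<le> \<bar>y i\<bar> + sqrt r" for i
    proof (cases "i < n")
      case True
      have "(y i - k i)\<^sup>2 \<le> sqdist n y k" unfolding sqdist_def
        using True by (intro member_le_sum) auto
      also have "\<dots> \<le> r" using k S_def by auto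
      finally have "\<bar>y i - k i\<bar> \<le> sqrt r" using real_le_rsqrt by (metis abs_le_square_iff real_sqrt_abs real_sqrt_le_mono)
      thus ?thesis by linarith
    next
      case False thus ?thesis using kV r0 by (simp add: V_def)
    qed
    have "k i \<in> {-(\<bar>y i\<bar> + sqrt r) .. \<bar>y i\<bar> + sqrt r}" for i
      using bnd[of i] unfolding atLeastAtMost_iff abs_le_iff by (intro conjI; linarith)
    thus "k \<in> P" unfolding P_def by (simp add: PiE_iff)
  qed
  have clS: "closed S" unfolding S_def
    by (intro closed_Int F(5)[folded K_def] closed_Collect_le sqdist_cont continuous_on_const)
  have cS: "compact S" using compact_Int_closed[OF cP clS] SP by (simp add: Int_absorb1)
  have S0: "(\<lambda>_. 0) \<in> S" using F(2) by (simp add: S_def r_def)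
  obtain p where pS: "p \<in> S" and pmin: "\<forall>k\<in>S. sqdist n y p \<le> sqdist n y k"
    using continuous_attains_inf[OF cS _ sqdist_cont] S0 by blast
  have pK: "p \<in> K" using pS S_def by auto
  have pmin2: "sqdist n y p \<le> sqdist n y k" if "k \<in> K" for k
  proof (cases "k \<in> S")
    case True thus ?thesis using pmin by auto
  next
    case False
    hence "sqdist n y k > r" using that S_def by auto
    moreover have "sqdist n y p \<le> r" using pS S_def by auto
    ultimately show ?thesis by simp
  qed
  define g where "g = (\<lambda>i. p i - y i)"
  have pV: "p \<in> V n" using pK F(1) by auto
  have yV: "y \<in> V n" using y n_def by simp
  have gV: "g \<in> V n" unfolding g_def using V_diff[OF pV yV] .
  have kk: "pair n k k \<ge> 0" for k unfolding pair_def by (intro sum_nonneg) auto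
  have gk: "pair n g k \<ge> 0" if kK: "k \<in> K" for k
  proof (rule ccontr)
    assume "\<not> ?thesis"
    then obtain t where t: "0 < t" "2 * t * pair n g k + t\<^sup>2 * pair n k k < 0"
      using quad_neg[of "pair n g k" "pair n k k"] kk by auto
    have "(\<lambda>i. t * k i) \<in> K" using F(4) t kK by auto
    hence "(\<lambda>i. p i + t * k i) \<in> K" using F(3) pK by auto
    hence "sqdist n y p \<le> sqdist n y (\<lambda>i. p i + t * k i)" using pmin2 by blast
    thus False using t sqdist_expand[of n y p t k] unfolding g_def by simp
  qed
  have gp: "pair n g p \<le> 0"
  proof (rule ccontr)
    assume "\<not> ?thesis"
    then obtain t where t: "0 < t" "t < 1" "2 * t * (- pair n g p) + t\<^sup>2 * pair n p p < 0"
      using quad_neg[of "- pair n g p" "pair n p p"] kk by auto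
    have "(\<lambda>i. (1 - t) * p i) \<in> K" using F(4) t pK by auto
    moreover have "(\<lambda>i. (1 - t) * p i) = (\<lambda>i. p i + (-t) * p i)" by (auto simp: algebra_simps)
    ultimately have "sqdist n y p \<le> sqdist n y (\<lambda>i. p i + (-t) * p i)" using pmin2 by auto
    thus False using t sqdist_expand[of n y p "-t" p] unfolding g_def by simp
  qed
  have "p \<noteq> y" using pK ny K_def by auto
  then obtain j where j: "j < n" "p j \<noteq> y j" using V_ext[OF pV yV] by blast
  have gg: "pair n g g > 0" unfolding pair_def
  proof -
    have "g j * g j \<le> (\<Sum>i<n. g i * g i)" using j by (intro member_le_sum) auto
    moreover have "g j * g j > 0" using j g_def by (auto simp: zero_less_mult_iff)
    ultimately show "(\<Sum>i<n. g i * g i) > 0" by linarith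
  qed
  have "pair n g y = pair n g p - pair n g g"
    unfolding pair_def g_def by (simp add: sum_subtractf[symmetric] algebra_simps)
  hence neg: "pair n g y < 0" using gp gg by linarith
  have "g \<in> dual_cone A" unfolding dual_cone_def using gV gk n_def K_def by auto
  thus False using pos neg n_def by force
qed

lemma left_inv_from_right:
  fixes M B :: "nat \<Rightarrow> nat \<Rightarrow> real"
  assumes R: "\<And>j k. j < n \<Longrightarrow> k < n \<Longrightarrow> (\<Sum>i<n. M j i * B i k) = (if j = k then 1 else 0)"
  shows "\<And>i l. i < n \<Longrightarrow> l < n \<Longrightarrow> (\<Sum>j<n. B i j * M j l) = (if i = l then 1 else 0)"
proof -
  define MA where "MA = mat n n (\<lambda>(j,i). M j i)"
  define BA where "BA = mat n n (\<lambda>(i,k). B i k)"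
  have cM: "MA \<in> carrier_mat n n" and cB: "BA \<in> carrier_mat n n" by (auto simp: MA_def BA_def)
  have "MA * BA = 1\<^sub>m n"
  proof (rule eq_matI)
    fix j k assume jk: "j < dim_row (1\<^sub>m n :: real mat)" "k < dim_col (1\<^sub>m n :: real mat)"
    hence "j < n" "k < n" by auto
    thus "(MA * BA) $$ (j, k) = 1\<^sub>m n $$ (j, k)"
      using R[of j k] by (simp add: MA_def BA_def scalar_prod_def lessThan_atLeast0)
  qed (auto simp: MA_def BA_def)
  hence BM: "BA * MA = 1\<^sub>m n" using mat_mult_left_right_inverse[OF cM cB] by simp
  fix i l assume il: "i < n" "l < n"
  have "(BA * MA) $$ (i, l) = (\<Sum>j<n. B i j * M j l)"
    using il by (simp add: MA_def BA_def scalar_prod_def lessThan_atLeast0)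
  thus "(\<Sum>j<n. B i j * M j l) = (if i = l then 1 else 0)" using BM il by simp
qed

lemma hat_add: "hat n m \<omega> (\<lambda>i. a i + b i) = (\<lambda>j. hat n m \<omega> a j + hat n m \<omega> b j)"
  by (auto simp: hat_def sum.distrib algebra_simps)
lemma hat_diff: "hat n m \<omega> (\<lambda>i. a i - b i) = (\<lambda>j. hat n m \<omega> a j - hat n m \<omega> b j)"
  by (auto simp: hat_def sum_subtractf algebra_simps)
lemma hat_scale: "hat n m \<omega> (\<lambda>i. c * a i) = (\<lambda>j. c * hat n m \<omega> a j)"
  by (auto simp: hat_def sum_distrib_left algebra_simps)
lemma hat_V: "hat n m \<omega> a \<in> V m"
  by (auto simp: hat_def V_def)
lemma bform_hat: "bform n m \<omega> f g = pair m g (hat n m \<omega> f)"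
  unfolding bform_def pair_def hat_def
  by (simp add: sum_distrib_left algebra_simps sum.swap[of _ "{..<n}"])

lemma pair_add: "pair n f (\<lambda>i. a i + b i) = pair n f a + pair n f b"
  by (simp add: pair_def sum.distrib algebra_simps)
lemma pair_scale: "pair n f (\<lambda>i. c * a i) = c * pair n f a"
  by (simp add: pair_def sum_distrib_left algebra_simps)
lemma pair_diff: "pair n f (\<lambda>i. a i - b i) = pair n f a - pair n f b"
  by (simp add: pair_def sum_subtractf algebra_simps)
lemma pair_scale1: "pair n (\<lambda>i. c * f i) a = c * pair n f a"
  by (simp add: pair_def sum_distrib_left algebra_simps)
lemma pair_diff1: "pair n (\<lambda>i. f i - g i) a = pair n f a - pair n g a"
  by (simp add: pair_def sum_subtractf algebra_simps)

lemma dual_V: "dual_cone A \<subseteq> V (sdim A)"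
  by (auto simp: dual_cone_def)
lemma dual_scale: "f \<in> dual_cone A \<Longrightarrow> c \<ge> 0 \<Longrightarrow> (\<lambda>i. c * f i) \<in> dual_cone A"
  by (auto simp: dual_cone_def pair_scale1 V_scale)

lemma pos_image:
  assumes sys: "is_system A" and om: "\<omega> \<in> max_cone A A" and f: "f \<in> dual_cone A"
  shows "hat (sdim A) (sdim A) \<omega> f \<in> scone A"
proof (rule bipolar[OF sys hat_V])
  show "\<forall>g\<in>dual_cone A. 0 \<le> pair (sdim A) g (hat (sdim A) (sdim A) \<omega> f)"
    using om f by (auto simp: max_cone_def bform_hat)
qed

lemma perturb:
  assumes x: "x \<in> rel_int n S" and SV: "S \<subseteq> V n" and z: "z \<in> V n"
  shows "\<exists>d>0. (\<lambda>i. x i - d * z i) \<in> S"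
proof -
  obtain e where e: "e > 0" "\<forall>y\<in>V n. sqdist n x y < e\<^sup>2 \<longrightarrow> y \<in> S"
    using x unfolding rel_int_def by blast
  have xS: "x \<in> S" using x unfolding rel_int_def by blast
  define N where "N = (\<Sum>i<n. (z i)\<^sup>2)"
  have N0: "N \<ge> 0" unfolding N_def by (intro sum_nonneg) auto
  define d where "d = e / (N + 1)"
  have d0: "d > 0" using e N0 by (simp add: d_def)
  have de: "d * (N + 1) = e" using N0 by (simp add: d_def)
  have "N < (N + 1)\<^sup>2" using N0 by (simp add: power2_eq_square algebra_simps) (smt (verit) mult_nonneg_nonneg)
  hence "d\<^sup>2 * N < d\<^sup>2 * (N + 1)\<^sup>2" using d0 by (intro mult_strict_left_mono) auto
  also have "\<dots> = e\<^sup>2" using de by (metis power_mult_distrib)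
  finally have lt: "d\<^sup>2 * N < e\<^sup>2" .
  have "sqdist n x (\<lambda>i. x i - d * z i) = d\<^sup>2 * N"
    by (simp add: sqdist_def N_def sum_distrib_left power_mult_distrib)
  moreover have "(\<lambda>i. x i - d * z i) \<in> V n"
    using xS SV z by (intro V_diff V_scale) auto
  ultimately have "(\<lambda>i. x i - d * z i) \<in> S" using e lt by auto
  thus ?thesis using d0 by blast
qed

lemma sum2: "(\<Sum>i<(2::nat). f i) = f 0 + f 1"
  by (simp add: numeral_2_eq_2)

lemma steer_onto:
  assumes sys: "is_system A" and st: "steers_marginal A A \<omega>"
    and marg: "marginalB A A \<omega> = \<alpha>" and int: "\<alpha> \<in> rel_int (sdim A) (scone A)"
    and b: "\<beta> \<in> scone A"
  shows "\<exists>f\<in>dual_cone A. hat (sdim A) (sdim A) \<omega> f = \<beta>"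
proof -
  note F = sys_facts[OF sys]
  obtain d where d: "d > 0" "(\<lambda>i. \<alpha> i - d * \<beta> i) \<in> scone A"
    using perturb[OF int F(1)] b F(1) by blast
  define bb where "bb = (\<lambda>k::nat. if k = 0 then (\<lambda>t. d * \<beta> t) else (\<lambda>t. \<alpha> t - d * \<beta> t))"
  have ens: "is_ensemble A (marginalB A A \<omega>) 2 bb"
    unfolding is_ensemble_def marg
  proof
    show "\<forall>i<2. bb i \<in> scone A" using d b F(4)[of d \<beta>] by (auto simp: bb_def)
    show "(\<lambda>t. \<Sum>i<2. bb i t) = \<alpha>" by (simp add: sum2 bb_def)
  qed
  obtain x where x: "is_observable A 2 x" "\<forall>i<2. hat (sdim A) (sdim A) \<omega> (x i) = bb i"
    using st[unfolded steers_marginal_def, rule_format, OF ens] by blast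
  have x0: "x 0 \<in> dual_cone A" using x(1) unfolding is_observable_def by auto
  have h0: "hat (sdim A) (sdim A) \<omega> (x 0) = (\<lambda>t. d * \<beta> t)" using x(2) by (auto simp: bb_def)
  define f where "f = (\<lambda>i. (1/d) * x 0 i)"
  have "f \<in> dual_cone A" unfolding f_def using dual_scale[OF x0, of "1/d"] d by simp
  moreover have "hat (sdim A) (sdim A) \<omega> f = \<beta>"
    unfolding f_def hat_scale h0 using d by simp
  ultimately show ?thesis by blast
qed

lemma inj_of_surj:
  assumes S: "\<forall>x\<in>V n. \<exists>f\<in>V n. hat n n \<omega> f = x"
  shows "inj_on (hat n n \<omega>) (V n)"
proof -
  define e where "e = (\<lambda>k::nat. \<lambda>i::nat. if i = k \<and> k < n then (1::real) else 0)"
  have eV: "e k \<in> V n" for k by (auto simp: e_def V_def)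
  have "\<forall>k. \<exists>f\<in>V n. hat n n \<omega> f = e k" using S eV by blast
  then obtain bb where bb: "\<And>k. bb k \<in> V n" "\<And>k. hat n n \<omega> (bb k) = e k" by metis
  define M where "M = (\<lambda>j i. \<omega> (i * n + j))"
  define B where "B = (\<lambda>i k. bb k i)"
  have R: "(\<Sum>i<n. M j i * B i k) = (if j = k then 1 else 0)" if "j < n" "k < n" for j k
  proof -
    have "(\<Sum>i<n. M j i * B i k) = hat n n \<omega> (bb k) j"
      using that by (simp add: M_def B_def hat_def)
    also have "\<dots> = (if j = k then 1 else 0)" using bb(2) that by (simp add: e_def)
    finally show ?thesis .
  qed
  note L = left_inv_from_right[of n M B, OF R]
  show ?thesis
  proof (rule inj_onI)
    fix f f' assume f: "f \<in> V n" "f' \<in> V n" and eq: "hat n n \<omega> f = hat n n \<omega> f'"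
    define g where "g = (\<lambda>i. f i - f' i)"
    have g0: "hat n n \<omega> g = (\<lambda>_. 0)" unfolding g_def hat_diff eq by simp
    have "g i = 0" if i: "i < n" for i
    proof -
      have "(\<Sum>l<n. (if i = l then 1 else 0) * g l) = (\<Sum>l<n. if i = l then g l else 0)"
        by (intro sum.cong) auto
      also have "\<dots> = g i" using i by simp
      finally have "g i = (\<Sum>l<n. (if i = l then 1 else 0) * g l)" by simp
      also have "\<dots> = (\<Sum>l<n. (\<Sum>j<n. B i j * M j l) * g l)"
        using L i by (intro sum.cong) auto
      also have "\<dots> = (\<Sum>l<n. \<Sum>j<n. B i j * M j l * g l)"
        by (simp add: sum_distrib_right)
      also have "\<dots> = (\<Sum>j<n. \<Sum>l<n. B i j * M j l * g l)"
        by (rule sum.swap)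
      also have "\<dots> = (\<Sum>j<n. B i j * (\<Sum>l<n. M j l * g l))"
        by (simp add: sum_distrib_left mult.assoc)
      also have "\<dots> = (\<Sum>j<n. B i j * hat n n \<omega> g j)"
        by (intro sum.cong) (auto simp: hat_def M_def algebra_simps)
      also have "\<dots> = 0" using g0 by simp
      finally show ?thesis .
    qed
    thus "f = f'" using V_ext[OF f] g_def by auto
  qed
qed

lemma key:
  assumes sys: "is_system A" and om: "\<omega> \<in> max_cone A A" and st: "steers_marginal A A \<omega>"
    and marg: "marginalB A A \<omega> = \<alpha>" and int: "\<alpha> \<in> rel_int (sdim A) (scone A)"
  shows "lin_on (sdim A) (hat (sdim A) (sdim A) \<omega>) \<and>
         bij_betw (hat (sdim A) (sdim A) \<omega>) (V (sdim A)) (V (sdim A)) \<and>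
         hat (sdim A) (sdim A) \<omega> ` dual_cone A = scone A \<and>
         hat (sdim A) (sdim A) \<omega> (sunit A) = \<alpha>"
proof -
  define n where "n = sdim A"
  define h where "h = hat n n \<omega>"
  note F = sys_facts[OF sys]
  have lin: "lin_on n h" unfolding lin_on_def h_def by (simp add: hat_add hat_scale)
  have img: "h ` dual_cone A = scone A"
  proof
    show "h ` dual_cone A \<subseteq> scone A" using pos_image[OF sys om] by (auto simp: h_def n_def)
    show "scone A \<subseteq> h ` dual_cone A"
      using steer_onto[OF sys st marg int] by (force simp: h_def n_def)
  qed
  have surj: "\<forall>x\<in>V n. \<exists>f\<in>V n. h f = x"
  proof
    fix x assume "x \<in> V n"
    then obtain a b where ab: "a \<in> scone A" "b \<in> scone A" "x = (\<lambda>i. a i - b i)"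
      using F(7) n_def by blast
    have "a \<in> h ` dual_cone A" "b \<in> h ` dual_cone A" using ab img by simp_all
    then obtain fa fb where "fa \<in> dual_cone A" "h fa = a" "fb \<in> dual_cone A" "h fb = b"
      by blast
    moreover hence "(\<lambda>i. fa i - fb i) \<in> V n" using dual_V n_def by (intro V_diff) auto
    ultimately show "\<exists>f\<in>V n. h f = x" using ab(3) by (intro bexI[of _ "\<lambda>i. fa i - fb i"]) (auto simp: h_def hat_diff)
  qed
  have inj: "inj_on h (V n)" using inj_of_surj[of n \<omega>] surj h_def by simp
  have "h ` V n = V n" using surj by (auto simp: h_def hat_V)
  hence bij: "bij_betw h (V n) (V n)" using inj by (simp add: bij_betw_def)
  have "h (sunit A) = \<alpha>" using marg by (simp add: marginalB_def h_def n_def)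
  thus ?thesis using lin img bij by (simp add: h_def n_def)
qed

lemma inv_lin:
  assumes lin: "lin_on n h" and bij: "bij_betw h (V n) (V n)"
  shows "lin_on n (inv_into (V n) h)" "bij_betw (inv_into (V n) h) (V n) (V n)"
proof -
  let ?g = "inv_into (V n) h"
  have inj: "inj_on h (V n)" and im: "h ` V n = V n" using bij by (auto simp: bij_betw_def)
  have gV: "?g x \<in> V n" if "x \<in> V n" for x using that im inv_into_into[of x h "V n"] by simp
  have hg: "h (?g x) = x" if "x \<in> V n" for x using that im f_inv_into_f[of x h "V n"] by simp
  show "bij_betw ?g (V n) (V n)" using bij by (rule bij_betw_inv_into)
  show "lin_on n ?g" unfolding lin_on_def
  proof (intro conjI ballI allI)
    fix x y assume xy: "x \<in> V n" "y \<in> V n"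
    have "h (\<lambda>i. ?g x i + ?g y i) = (\<lambda>i. x i + y i)"
      using lin gV hg xy unfolding lin_on_def by simp
    moreover have zV: "(\<lambda>i. ?g x i + ?g y i) \<in> V n" using gV xy by (intro V_add)
    ultimately show "?g (\<lambda>i. x i + y i) = (\<lambda>i. ?g x i + ?g y i)"
      using inv_into_f_f[OF inj zV] by simp
  next
    fix c x assume x: "x \<in> V n"
    have "h (\<lambda>i. c * ?g x i) = (\<lambda>i. c * x i)"
      using lin gV hg x unfolding lin_on_def by simp
    moreover have zV: "(\<lambda>i. c * ?g x i) \<in> V n" using gV x by (intro V_scale)
    ultimately show "?g (\<lambda>i. c * x i) = (\<lambda>i. c * ?g x i)"
      using inv_into_f_f[OF inj zV] by simp
  qed
qed

lemma rel_int_sub: "rel_int n S \<subseteq> S" by (auto simp: rel_int_def)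

lemma cone_sum:
  assumes sys: "is_system A" and fin: "finite I" and f: "\<And>i. i \<in> I \<Longrightarrow> f i \<in> scone A"
  shows "(\<lambda>t. \<Sum>i\<in>I. f i t) \<in> scone A"
  using fin f
proof (induction I rule: finite_induct)
  case empty thus ?case using sys_facts(2)[OF sys] by simp
next
  case (insert x F)
  hence "(\<lambda>t. f x t + (\<Sum>i\<in>F. f i t)) \<in> scone A"
    using sys_facts(3)[OF sys] by auto
  thus ?case using insert by simp
qed

lemma pos_unit:
  assumes sys: "is_system A" and n1: "sdim A \<ge> 1" and a: "a \<in> rel_int (sdim A) (scone A)"
  shows "pair (sdim A) (sunit A) a > 0"
proof -
  define n where "n = sdim A"
  note F = sys_facts[OF sys, folded n_def]
  have aK: "a \<in> scone A" using a rel_int_sub by blast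
  have aV: "a \<in> V n" using aK F(1) by auto
  have an0: "a \<noteq> (\<lambda>_. 0)"
  proof
    assume a0: "a = (\<lambda>_. 0)"
    obtain e where e: "e > 0" "\<forall>y\<in>V n. sqdist n a y < e\<^sup>2 \<longrightarrow> y \<in> scone A"
      using a unfolding rel_int_def n_def by blast
    define y where "y = (\<lambda>i::nat. if i = 0 then e/2 else 0)"
    have yV: "y \<in> V n" "(\<lambda>i. - y i) \<in> V n" using n1 n_def by (auto simp: y_def V_def)
    have t1: "\<And>i. (a i - y i)\<^sup>2 = (if i = 0 then (e/2)\<^sup>2 else 0)" by (simp add: a0 y_def)
    have t2: "\<And>i. (a i - (- y i))\<^sup>2 = (if i = 0 then (e/2)\<^sup>2 else 0)" by (simp add: a0 y_def)
    have n0: "0 \<in> {..<n}" using n1 n_def by auto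
    have "sqdist n a y = (e/2)\<^sup>2" "sqdist n a (\<lambda>i. - y i) = (e/2)\<^sup>2"
      unfolding sqdist_def t1 t2 using n0 by (simp_all only: sum.delta finite_lessThan if_True)
    moreover have "(e/2)\<^sup>2 < e\<^sup>2" using e by (simp add: power2_eq_square)
    ultimately have "y \<in> scone A" "(\<lambda>i. - y i) \<in> scone A" using e yV by auto
    hence "y = (\<lambda>_. 0)" using F(6) by blast
    hence "y 0 = 0" by simp
    thus False using e by (simp add: y_def)
  qed
  then obtain j where j: "j < n" "a j \<noteq> 0" using V_ext[OF aV V_zero] by blast
  have aa: "pair n a a > 0" unfolding pair_def
  proof -
    have "a j * a j \<le> (\<Sum>i<n. a i * a i)" using j by (intro member_le_sum) auto
    moreover have "a j * a j > 0" using j by (auto simp: zero_less_mult_iff)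
    ultimately show "(\<Sum>i<n. a i * a i) > 0" by linarith
  qed
  obtain d where d: "d > 0" "(\<lambda>i. sunit A i - d * a i) \<in> dual_cone A"
    using perturb[OF F(8) dual_V[of A, folded n_def] aV] by blast
  hence "0 \<le> pair n (\<lambda>i. sunit A i - d * a i) a"
    using aK unfolding dual_cone_def n_def by auto
  hence "0 \<le> pair n (sunit A) a - d * pair n a a" by (simp add: pair_diff1 pair_scale1)
  moreover have "d * pair n a a > 0" using d aa by simp
  ultimately show ?thesis unfolding n_def[symmetric] by linarith
qed

lemma scale_int:
  assumes sys: "is_system A" and t: "t > 0" and a: "a \<in> rel_int (sdim A) (scone A)"
  shows "(\<lambda>i. t * a i) \<in> rel_int (sdim A) (scone A)"
proof -
  define n where "n = sdim A"
  note F = sys_facts[OF sys, folded n_def]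
  obtain e where e: "e > 0" "\<forall>y\<in>V n. sqdist n a y < e\<^sup>2 \<longrightarrow> y \<in> scone A"
    using a unfolding rel_int_def n_def by blast
  have aK: "a \<in> scone A" using a rel_int_sub by blast
  have "\<forall>y\<in>V n. sqdist n (\<lambda>i. t * a i) y < (t*e)\<^sup>2 \<longrightarrow> y \<in> scone A"
  proof (intro ballI impI)
    fix y assume y: "y \<in> V n" "sqdist n (\<lambda>i. t * a i) y < (t*e)\<^sup>2"
    have "sqdist n (\<lambda>i. t * a i) y = t\<^sup>2 * sqdist n a (\<lambda>i. y i / t)"
    proof -
      have "\<And>i. (t * a i - y i)\<^sup>2 = t\<^sup>2 * (a i - y i / t)\<^sup>2" using t
        by (simp add: power2_eq_square field_simps)
      thus ?thesis by (simp add: sqdist_def sum_distrib_left)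
    qed
    hence "t\<^sup>2 * sqdist n a (\<lambda>i. y i / t) < t\<^sup>2 * e\<^sup>2" using y(2) by (simp add: power_mult_distrib)
    hence "sqdist n a (\<lambda>i. y i / t) < e\<^sup>2" using t by simp
    moreover have "(\<lambda>i. y i / t) \<in> V n" using y(1) by (auto simp: V_def)
    ultimately have "(\<lambda>i. y i / t) \<in> scone A" using e by auto
    hence "(\<lambda>i. t * (y i / t)) \<in> scone A" by (rule F(4)[rotated]) (use t in auto)
    moreover have "(\<lambda>i. t * (y i / t)) = y" using t by (intro ext) simp
    ultimately show "y \<in> scone A" by simp
  qed
  moreover have "(\<lambda>i. t * a i) \<in> scone A" using F(4) t aK by auto
  moreover have "t * e > 0" using t e by simp
  ultimately show ?thesis unfolding rel_int_def n_def by blast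
qed

lemma exists_int:
  assumes sys: "is_system A"
  shows "\<exists>c. c \<in> rel_int (sdim A) (scone A)"
proof -
  define n where "n = sdim A"
  note F = sys_facts[OF sys, folded n_def]
  define e where "e = (\<lambda>k::nat. \<lambda>i::nat. if i = k \<and> k < n then (1::real) else 0)"
  have eV: "e k \<in> V n" for k by (auto simp: e_def V_def)
  have "\<forall>k. \<exists>p\<in>scone A. \<exists>q\<in>scone A. e k = (\<lambda>i. p i - q i)" using F(7) eV by blast
  then obtain p q where pq: "\<And>k. p k \<in> scone A" "\<And>k. q k \<in> scone A" "\<And>k. e k = (\<lambda>i. p k i - q k i)"
    by metis
  define c where "c = (\<lambda>t. \<Sum>k<n. p k t + q k t)"
  have pqK: "(\<lambda>t. p k t + q k t) \<in> scone A" for k by (rule F(3)[OF pq(1) pq(2)])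
  have cK: "c \<in> scone A" unfolding c_def
    using cone_sum[OF sys finite_lessThan, of n "\<lambda>k t. p k t + q k t"] pqK by simp
  have "\<forall>y\<in>V n. sqdist n c y < 1\<^sup>2 \<longrightarrow> y \<in> scone A"
  proof (intro ballI impI)
    fix y assume y: "y \<in> V n" "sqdist n c y < 1\<^sup>2"
    define x where "x = (\<lambda>i. y i - c i)"
    have xb: "\<bar>x k\<bar> \<le> 1" if "k < n" for k
    proof -
      have "(c k - y k)\<^sup>2 \<le> sqdist n c y" unfolding sqdist_def using that
        by (intro member_le_sum) auto
      hence "(x k)\<^sup>2 \<le> 1" using y(2) by (simp add: x_def power2_commute)
      thus ?thesis using abs_le_square_iff[of "x k" 1] by simp
    qed
    have tm: "(\<lambda>t. (1 + x k) * p k t + (1 - x k) * q k t) \<in> scone A" if "k < n" for k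
    proof -
      have "0 \<le> 1 + x k" "0 \<le> 1 - x k" using xb[OF that] by (simp_all add: abs_le_iff)
      hence "(\<lambda>t. (1 + x k) * p k t) \<in> scone A" "(\<lambda>t. (1 - x k) * q k t) \<in> scone A"
        using F(4)[OF _ pq(1)] F(4)[OF _ pq(2)] by simp_all
      thus ?thesis by (rule F(3))
    qed
    have "y = (\<lambda>t. \<Sum>k<n. (1 + x k) * p k t + (1 - x k) * q k t)"
    proof (rule ext)
      fix t
      have "(\<Sum>k<n. (1 + x k) * p k t + (1 - x k) * q k t) = (\<Sum>k<n. (p k t + q k t) + x k * (p k t - q k t))"
        by (intro sum.cong) (auto simp: algebra_simps)
      also have "\<dots> = c t + (\<Sum>k<n. x k * (p k t - q k t))"
        by (simp only: c_def sum.distrib)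
      also have "(\<Sum>k<n. x k * (p k t - q k t)) = (\<Sum>k<n. x k * e k t)"
        by (intro sum.cong) (simp_all add: pq(3))
      also have "\<dots> = (\<Sum>k<n. if k = t then x t else 0)"
        by (intro sum.cong) (auto simp: e_def)
      also have "\<dots> = x t"
      proof (cases "t < n")
        case True thus ?thesis by simp
      next
        case False
        have "c \<in> V n" using cK F(1) by auto
        thus ?thesis using False y(1) by (auto simp: x_def V_def)
      qed
      finally show "y t = (\<Sum>k<n. (1 + x k) * p k t + (1 - x k) * q k t)" by (simp add: x_def)
    qed
    moreover have "(\<lambda>t. \<Sum>k\<in>{..<n}. (1 + x k) * p k t + (1 - x k) * q k t) \<in> scone A"
      using cone_sum[OF sys finite_lessThan, of n "\<lambda>k t. (1 + x k) * p k t + (1 - x k) * q k t"] tm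
      by simp
    ultimately show "y \<in> scone A" by simp
  qed
  hence "\<exists>e>0. \<forall>y\<in>V n. sqdist n c y < e\<^sup>2 \<longrightarrow> y \<in> scone A"
    by (intro exI[of _ "1::real"]) simp
  hence "c \<in> rel_int n (scone A)" using cK by (simp add: rel_int_def)
  thus ?thesis unfolding n_def by blast
qed

lemma lin_comp:
  assumes "lin_on n f" "lin_on n h" "\<forall>x\<in>V n. f x \<in> V n"
  shows "lin_on n (\<lambda>x. h (f x))"
  using assms unfolding lin_on_def by (simp add: V_add V_scale)

lemma lin_sc: "lin_on n (\<lambda>x i. c * x i)"
  unfolding lin_on_def by (simp add: algebra_simps)

lemma bij_sc: assumes "c \<noteq> 0" shows "bij_betw (\<lambda>x i. c * x i) (V n) (V n)"
  by (rule bij_betw_byWitness[where f'="\<lambda>x i. x i / c"]) (use assms in \<open>auto simp: V_def\<close>)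

lemma sc_cone: assumes sys: "is_system A" and c: "c > 0"
  shows "(\<lambda>x i. c * x i) ` scone A = scone A"
proof
  show "(\<lambda>x i. c * x i) ` scone A \<subseteq> scone A" using sys_facts(4)[OF sys] c by auto
  show "scone A \<subseteq> (\<lambda>x i. c * x i) ` scone A"
  proof
    fix y assume y: "y \<in> scone A"
    have "(\<lambda>i. (1/c) * y i) \<in> scone A" using sys_facts(4)[OF sys, of "1/c" y] c y by simp
    moreover have "y = (\<lambda>x i. c * x i) (\<lambda>i. (1/c) * y i)" using c by (intro ext) simp
    ultimately show "y \<in> (\<lambda>x i. c * x i) ` scone A" by (intro image_eqI)
  qed
qed

theorem proposition5p8:
  assumes "probabilistic_theory T"
    and "universal_self_steering T"
    and "A \<in> T"
    and "irreducible A"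
  shows "homogeneous A \<and> weakly_self_dual A"
proof -
  note pt = assms(1) and uss = assms(2) and AT = assms(3)
  have sys: "is_system A" using pt AT unfolding probabilistic_theory_def by blast
  define n where "n = sdim A"
  define K where "K = scone A"
  define D where "D = dual_cone A"
  define u where "u = sunit A"
  note F = sys_facts[OF sys, folded n_def K_def D_def u_def]
  have KEY: "\<exists>h. lin_on n h \<and> bij_betw h (V n) (V n) \<and> h ` D = K \<and> h u = \<alpha>"
    if al: "\<alpha> \<in> rel_int n K" "pair n u \<alpha> = 1" for \<alpha>
  proof -
    have st: "is_state A \<alpha>" using al rel_int_sub unfolding is_state_def n_def K_def u_def by blast
    obtain C \<omega> where C: "C \<in> T" "is_composite A A C" "is_state C \<omega>" "marginalB A A \<omega> = \<alpha>"
      "steers_marginal A A \<omega>"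
      using uss[unfolded universal_self_steering_def, rule_format, OF AT st] by blast
    have om: "\<omega> \<in> max_cone A A" using C(2,3) unfolding is_composite_def is_state_def by blast
    show ?thesis using key[OF sys om C(5) C(4)] al(1)
      unfolding n_def K_def D_def u_def by blast
  qed
  show ?thesis
  proof (cases "n = 0")
    case True
    have V0: "V n = {\<lambda>_. 0}" using True by (auto simp: V_def)
    have KV: "K = V n" using F(1,2) V0 by auto
    have DV: "D = V n" using V0 D_def dual_V[of A] n_def
      by (auto simp: dual_cone_def pair_def True)
    have "order_automorphism A id" unfolding order_automorphism_def lin_on_def
      by (simp add: bij_betw_id)
    moreover have "a = b" if "a \<in> rel_int n K" "b \<in> rel_int n K" for a b
      using that rel_int_sub[of n K] KV V0 by auto
    ultimately have "homogeneous A" unfolding homogeneous_def n_def[symmetric] K_def[symmetric]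
      by (metis id_apply)
    moreover have "weakly_self_dual A" unfolding weakly_self_dual_def
      using KV DV n_def K_def D_def
      by (intro exI[of _ id]) (simp add: lin_on_def bij_betw_id)
    ultimately show ?thesis ..
  next
    case False
    hence n1: "sdim A \<ge> 1" using n_def by simp
    have norm: "(\<lambda>i. (1 / pair n u a) * a i) \<in> rel_int n K \<and>
                pair n u (\<lambda>i. (1 / pair n u a) * a i) = 1 \<and> pair n u a > 0"
      if a: "a \<in> rel_int n K" for a
    proof -
      have s: "pair n u a > 0" using pos_unit[OF sys n1] a unfolding n_def K_def u_def by blast
      have "(\<lambda>i. (1 / pair n u a) * a i) \<in> rel_int n K"
        using scale_int[OF sys, of "1 / pair n u a" a] s a unfolding n_def K_def by simp
      moreover have "pair n u (\<lambda>i. (1 / pair n u a) * a i) = 1" unfolding pair_scale using s by simp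
      ultimately show ?thesis using s by blast
    qed
    have wsd: "weakly_self_dual A"
    proof -
      obtain c where c: "c \<in> rel_int n K" using exists_int[OF sys] unfolding n_def K_def by blast
      obtain h where "lin_on n h" "bij_betw h (V n) (V n)" "h ` D = K"
        using KEY norm[OF c] by blast
      thus ?thesis unfolding weakly_self_dual_def n_def D_def K_def by blast
    qed
    have hom: "homogeneous A" unfolding homogeneous_def n_def[symmetric] K_def[symmetric]
    proof (intro ballI)
      fix a b assume a: "a \<in> rel_int n K" and b: "b \<in> rel_int n K"
      define sa where "sa = pair n u a"
      define sb where "sb = pair n u b"
      have sa: "sa > 0" using norm[OF a] sa_def by simp
      have sb: "sb > 0" using norm[OF b] sb_def by simp
      obtain ha where ha: "lin_on n ha" "bij_betw ha (V n) (V n)" "ha ` D = K"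
        "ha u = (\<lambda>i. (1 / sa) * a i)"
        using KEY norm[OF a] unfolding sa_def by blast
      obtain hb where hb: "lin_on n hb" "bij_betw hb (V n) (V n)" "hb ` D = K"
        "hb u = (\<lambda>i. (1 / sb) * b i)"
        using KEY norm[OF b] unfolding sb_def by blast
      define gi where "gi = inv_into (V n) ha"
      note GI = inv_lin[OF ha(1,2), folded gi_def]
      define sc where "sc = (\<lambda>(x::nat\<Rightarrow>real) (i::nat). (sb / sa) * x i)"
      define g where "g = (\<lambda>x. sc (hb (gi x)))"
      have injha: "inj_on ha (V n)" using ha(2) by (simp add: bij_betw_def)
      have giV: "\<forall>x\<in>V n. gi x \<in> V n" using GI(2) by (auto simp: bij_betw_def)
      have hbV: "\<forall>x\<in>V n. hb x \<in> V n" using hb(2) by (auto simp: bij_betw_def)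
      have lin: "lin_on n g" unfolding g_def sc_def
        using lin_comp[OF lin_comp[OF GI(1) hb(1) giV] lin_sc[of n "sb/sa"]] giV hbV by blast
      have bij: "bij_betw g (V n) (V n)"
      proof -
        have "bij_betw (\<lambda>x. hb (gi x)) (V n) (V n)"
          using bij_betw_trans[OF GI(2) hb(2)] by (simp add: comp_def)
        moreover have "bij_betw sc (V n) (V n)" unfolding sc_def using sa sb by (intro bij_sc) simp
        ultimately show ?thesis using bij_betw_trans by (fastforce simp: g_def comp_def)
      qed
      have DsubV: "D \<subseteq> V n" using dual_V[of A] D_def n_def by simp
      have giK: "gi ` K = D" unfolding gi_def using inv_into_image_cancel[OF injha DsubV] ha(3) by simp
      have "g ` K = sc ` hb ` gi ` K" by (simp add: g_def image_image)
      also have "\<dots> = K" using giK hb(3) sc_cone[OF sys, of "sb/sa"] sa sb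
        unfolding sc_def K_def by simp
      finally have gK: "g ` K = K" .
      have uV: "u \<in> V n" using F(8) rel_int_sub[of n D] DsubV by auto
      have suV: "(\<lambda>i. sa * u i) \<in> V n" using uV by (rule V_scale)
      have "ha (\<lambda>i. sa * u i) = (\<lambda>i. sa * ha u i)" using ha(1) uV unfolding lin_on_def by blast
      also have "\<dots> = a" using ha(4) sa by (simp add: ext)
      finally have "gi a = (\<lambda>i. sa * u i)" unfolding gi_def using inv_into_f_f[OF injha suV] by simp
      hence "g a = sc (\<lambda>i. sa * hb u i)" using hb(1) uV unfolding g_def lin_on_def by simp
      also have "\<dots> = b" using hb(4) sa sb by (simp add: sc_def)
      finally have gab: "g a = b" .
      show "\<exists>g. order_automorphism A g \<and> g a = b"
        using lin bij gK gab unfolding order_automorphism_def n_def K_def by blast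
    qed
    show ?thesis using hom wsd by blast
  qed
qed

end
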